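(* In a Gaussian layered relay network with layers $0,1,\dots,L$ (as in the context) operating the amplify-and-forward scheme under the individual power constraints $E[x_k^2]\le P_k^{Up}$ at every relay $k$, the optimal achievable rate $R_{opt}$ satisfies $$R_{opt}\le \min_{l_0=1,2,\dots,L}\ \frac12\log_2\Big(1+\sum_{k\in\mathcal L_{l_0}}P_{R,k}\Big).$$
   Context: Layer $\mathcal L_0=\{S\}$ contains the source, layer $\mathcal L_L=\{D\}$ the destination, and layers $\mathcal L_1,\dots,\mathcal L_{L-1}$ contain relay nodes. Every node $k\in\mathcal L_{l+1}$ receives $y_k=\sum_{j\in\mathcal L_l}h_{j,k}x_j+z_k$, where all channel gains $h_{j,k}$ are fixed positive reals, $x_j$ is the signal sent by node $j$, and the noises $z_k\sim\mathcal N(0,1)$ are independent across non-source nodes and independent of the source signal. The source sends Gaussian codewords with input $x_S\sim\mathcal N(0,P_S)$, $P_S\le P_S^{Up}$. Each relay $k$ transmits $x_k=\beta_k y_k$ with a real amplification gain $\beta_k$ (instantaneous relaying), and the gains must satisfy the power constraints $E[x_k^2]\le P_k^{Up}$. By linearity, $y_D=f_{S,D}x_S+\sum_{j\text{ relay}}f_{j,D}z_j+z_D$ for real coefficients determined by the gains and channel gains, and the achievable rate of a gain choice is $\frac12\log_2\big(1+f_{S,D}^2P_S/(\sum_j f_{j,D}^2+1)\big)$; $R_{opt}$ is the supremum of this rate over all gain choices satisfying the power constraints. For every node $k$ in layer $l\ge1$, $P_{R,k}=\big(\sum_{j\in\mathcal L_{l-1}}h_{j,k}\sqrt{P_j^{Up}}\big)^2$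 (with $P_S^{Up}$ used for the source). *)

theory Defs
  imports Complex_Main
begin

text \<open>Nodes have type 'v, Lay l is the set of
nodes in layer l (Lay 0 = {S}, Lay L = {D}), h j k is the channel gain from j to k,
beta k is the amplification gain of relay k. Each signal is represented by its
linear coefficients: (coefficient of x_S, coefficient of each noise z_i).\<close>

primrec xsig :: "('v \<Rightarrow> real) \<Rightarrow> ('v \<Rightarrow> 'v \<Rightarrow> real) \<Rightarrow> (nat \<Rightarrow> 'v set) \<Rightarrow> nat \<Rightarrow> 'v
                 \<Rightarrow> real \<times> ('v \<Rightarrow> real)" where
  "xsig beta h Lay 0 k = (1, \<lambda>i. 0)"
| "xsig beta h Lay (Suc l) k =
     (beta k * (\<Sum>j\<in>Lay l. h j k * fst (xsig beta h Lay l j)),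
      \<lambda>i. beta k * ((\<Sum>j\<in>Lay l. h j k * snd (xsig beta h Lay l j) i) + (if i = k then 1 else 0)))"

text \<open>Received signal y_k of a node k in layer Suc l: sum over layer l plus own noise z_k.\<close>
definition ysig :: "('v \<Rightarrow> real) \<Rightarrow> ('v \<Rightarrow> 'v \<Rightarrow> real) \<Rightarrow> (nat \<Rightarrow> 'v set) \<Rightarrow> nat \<Rightarrow> 'v
                 \<Rightarrow> real \<times> ('v \<Rightarrow> real)" where
  "ysig beta h Lay l k =
     ((\<Sum>j\<in>Lay l. h j k * fst (xsig beta h Lay l j)),
      \<lambda>i. (\<Sum>j\<in>Lay l. h j k * snd (xsig beta h Lay l j) i) + (if i = k then 1 else 0))"

definition noise_nodes :: "(nat \<Rightarrow> 'v set) \<Rightarrow> nat \<Rightarrow> 'v set" where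
  "noise_nodes Lay L = (\<Union>l\<in>{1..L}. Lay l)"

definition relay_nodes :: "(nat \<Rightarrow> 'v set) \<Rightarrow> nat \<Rightarrow> 'v set" where
  "relay_nodes Lay L = (\<Union>l\<in>{1..<L}. Lay l)"

text \<open>Second moment E[x^2] of a linear combination a x_S + sum_i b_i z_i
  (x_S ~ N(0,PS), z_i ~ N(0,1) independent).\<close>
definition power :: "real \<Rightarrow> 'v set \<Rightarrow> real \<times> ('v \<Rightarrow> real) \<Rightarrow> real" where
  "power PS N c = (fst c)\<^sup>2 * PS + (\<Sum>i\<in>N. (snd c i)\<^sup>2)"

definition feasible :: "('v \<Rightarrow> 'v \<Rightarrow> real) \<Rightarrow> (nat \<Rightarrow> 'v set) \<Rightarrow> nat \<Rightarrow> ('v \<Rightarrow> real) \<Rightarrow> real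
                        \<Rightarrow> ('v \<Rightarrow> real) \<Rightarrow> bool" where
  "feasible h Lay L Pup PS beta \<longleftrightarrow>
     (\<forall>l\<in>{1..<L}. \<forall>k\<in>Lay l. power PS (noise_nodes Lay L) (xsig beta h Lay l k) \<le> Pup k)"

text \<open>Rate of a gain choice: y_D = f_SD x_S + sum_relays f_jD z_j + z_D.\<close>
definition rate :: "('v \<Rightarrow> 'v \<Rightarrow> real) \<Rightarrow> (nat \<Rightarrow> 'v set) \<Rightarrow> nat \<Rightarrow> 'v \<Rightarrow> real
                    \<Rightarrow> ('v \<Rightarrow> real) \<Rightarrow> real" where
  "rate h Lay L D PS beta =
     (let c = ysig beta h Lay (L - 1) D in
      1/2 * log 2 (1 + (fst c)\<^sup>2 * PS / ((\<Sum>j\<in>relay_nodes Lay L. (snd c j)\<^sup>2) + 1)))"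

definition R_opt :: "('v \<Rightarrow> 'v \<Rightarrow> real) \<Rightarrow> (nat \<Rightarrow> 'v set) \<Rightarrow> nat \<Rightarrow> 'v \<Rightarrow> ('v \<Rightarrow> real) \<Rightarrow> real
                     \<Rightarrow> real" where
  "R_opt h Lay L D Pup PS = Sup {rate h Lay L D PS beta | beta. feasible h Lay L Pup PS beta}"

text \<open>P_{R,k} for k in layer l \<ge> 1 (Pup S plays the role of P_S^Up).\<close>
definition P_R :: "('v \<Rightarrow> 'v \<Rightarrow> real) \<Rightarrow> (nat \<Rightarrow> 'v set) \<Rightarrow> ('v \<Rightarrow> real) \<Rightarrow> nat \<Rightarrow> 'v \<Rightarrow> real" where
  "P_R h Lay Pup l k = (\<Sum>j\<in>Lay (l - 1). h j k * sqrt (Pup j))\<^sup>2"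

end

theory Submission
  imports Defs "HOL-Analysis.Convex"
begin


lemma xsig_support:
  "k \<in> Lay l \<Longrightarrow> i \<notin> (\<Union>l'\<in>{1..l}. Lay l') \<Longrightarrow> snd (xsig beta h Lay l k) i = 0"
proof (induction l arbitrary: k)
  case 0 then show ?case by simp
next
  case (Suc l)
  have ik: "i \<noteq> k" using Suc.prems by auto
  have "\<And>j. j \<in> Lay l \<Longrightarrow> snd (xsig beta h Lay l j) i = 0"
    using Suc.IH Suc.prems(2) by auto
  then show ?case using ik by simp
qed

lemma xsig_Suc:
  "xsig beta h Lay (Suc n) j = (beta j * fst (ysig beta h Lay n j), \<lambda>i. beta j * snd (ysig beta h Lay n j) i)"
  by (simp add: ysig_def)

lemma step_fst:
  "(\<Sum>k\<in>K. d k * fst (ysig beta h Lay (Suc n) k))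
   = (\<Sum>j\<in>Lay (Suc n). (beta j * (\<Sum>k\<in>K. d k * h j k)) * fst (ysig beta h Lay n j))"
  unfolding ysig_def[of _ _ _ "Suc n"] xsig_Suc
  by (simp add: sum_distrib_left sum_distrib_right sum.swap[of _ K] mult_ac)

lemma step_snd:
  "(\<Sum>k\<in>K. d k * snd (ysig beta h Lay (Suc n) k) i)
   = (\<Sum>j\<in>Lay (Suc n). (beta j * (\<Sum>k\<in>K. d k * h j k)) * snd (ysig beta h Lay n j) i)
     + (\<Sum>k\<in>K. d k * (if i = k then 1 else 0))"
  unfolding ysig_def[of _ _ _ "Suc n"] xsig_Suc
  by (simp add: sum_distrib_left sum_distrib_right sum.swap[of _ K] mult_ac distrib_left sum.distrib)



lemma invariant:
  fixes Lay :: "nat \<Rightarrow> 'v set" and T PS :: real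
  assumes fin: "\<And>l. l \<le> L \<Longrightarrow> finite (Lay l)"
    and disj: "\<And>l l'. l \<le> L \<Longrightarrow> l' \<le> L \<Longrightarrow> l \<noteq> l' \<Longrightarrow> Lay l \<inter> Lay l' = {}"
    and PS: "0 \<le> PS" and T: "0 \<le> T"
    and base: "\<And>d. (\<Sum>k\<in>Lay (Suc p). d k * fst (ysig beta h Lay p k))\<^sup>2 * PS
                  \<le> T * (\<Sum>k\<in>Lay (Suc p). (d k)\<^sup>2)"
    and pn: "p \<le> n" and nL: "Suc n \<le> L"
  shows "(\<Sum>k\<in>Lay (Suc n). d k * fst (ysig beta h Lay n k))\<^sup>2 * PS
         \<le> T * (\<Sum>i\<in>(\<Union>l\<in>{Suc p..Suc n}. Lay l). (\<Sum>k\<in>Lay (Suc n). d k * snd (ysig beta h Lay n k) i)\<^sup>2)"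
  using pn nL
proof (induction n arbitrary: d rule: dec_induct)
  case base
  have "\<And>i. i \<in> Lay (Suc p) \<Longrightarrow> (\<Sum>k\<in>Lay (Suc p). d k * snd (ysig beta h Lay p k) i) = d i"
  proof -
    fix i assume i: "i \<in> Lay (Suc p)"
    have nz: "\<And>j. j \<in> Lay p \<Longrightarrow> snd (xsig beta h Lay p j) i = 0"
    proof (rule xsig_support)
      fix j assume "j \<in> Lay p" then show "j \<in> Lay p" .
      show "i \<notin> (\<Union>l'\<in>{1..p}. Lay l')"
      proof
        assume "i \<in> (\<Union>l'\<in>{1..p}. Lay l')"
        then obtain l' where "l' \<in> {1..p}" "i \<in> Lay l'" by blast
        then show False using disj[of "Suc p" l'] i base.prems by auto
      qed
    qed
    have "(\<Sum>k\<in>Lay (Suc p). d k * snd (ysig beta h Lay p k) i) = (\<Sum>k\<in>Lay (Suc p). d k * (if i = k then 1 else 0))"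
      unfolding ysig_def using nz by simp
    also have "\<dots> = d i" proof -
      have "(\<lambda>k. d k * (if i = k then 1 else 0)) = (\<lambda>k. if i = k then d k else 0)" by auto
      then show ?thesis using i fin[of "Suc p"] base.prems by (simp only: sum.delta) simp
    qed
    finally show "(\<Sum>k\<in>Lay (Suc p). d k * snd (ysig beta h Lay p k) i) = d i" .
  qed
  then have "(\<Sum>i\<in>(\<Union>l\<in>{Suc p..Suc p}. Lay l). (\<Sum>k\<in>Lay (Suc p). d k * snd (ysig beta h Lay p k) i)\<^sup>2)
     = (\<Sum>k\<in>Lay (Suc p). (d k)\<^sup>2)" by simp
  then show ?case using assms(5)[of d] by simp
next
  case (step n)
  let ?K = "Lay (Suc (Suc n))"
  let ?N = "\<Union>l\<in>{Suc p..Suc n}. Lay l"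
  let ?N' = "\<Union>l\<in>{Suc p..Suc (Suc n)}. Lay l"
  define c where "c j = beta j * (\<Sum>k\<in>?K. d k * h j k)" for j
  have IH: "(\<Sum>j\<in>Lay (Suc n). c j * fst (ysig beta h Lay n j))\<^sup>2 * PS
         \<le> T * (\<Sum>i\<in>?N. (\<Sum>j\<in>Lay (Suc n). c j * snd (ysig beta h Lay n j) i)\<^sup>2)"
    using step.IH[of c] step.prems by simp
  have f: "(\<Sum>k\<in>?K. d k * fst (ysig beta h Lay (Suc n) k)) = (\<Sum>j\<in>Lay (Suc n). c j * fst (ysig beta h Lay n j))"
    unfolding c_def by (rule step_fst)
  have s: "(\<Sum>k\<in>?K. d k * snd (ysig beta h Lay (Suc n) k) i) = (\<Sum>j\<in>Lay (Suc n). c j * snd (ysig beta h Lay n j) i)"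
    if i: "i \<in> ?N" for i
  proof -
    have "i \<notin> ?K"
    proof
      assume iK: "i \<in> ?K"
      from i obtain l' where "l' \<in> {Suc p..Suc n}" "i \<in> Lay l'" by blast
      then show False using disj[of "Suc (Suc n)" l'] iK step.prems by auto
    qed
    then have "(\<Sum>k\<in>?K. d k * (if i = k then 1 else 0)) = 0" by (intro sum.neutral) auto
    then show ?thesis unfolding c_def using step_snd[where K="?K" and d=d and n=n and i=i] by simp
  qed
  have finN': "finite ?N'" using fin step.prems by auto
  have "(\<Sum>i\<in>?N. (\<Sum>j\<in>Lay (Suc n). c j * snd (ysig beta h Lay n j) i)\<^sup>2)
      = (\<Sum>i\<in>?N. (\<Sum>k\<in>?K. d k * snd (ysig beta h Lay (Suc n) k) i)\<^sup>2)"
    using s by simp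
  also have "\<dots> \<le> (\<Sum>i\<in>?N'. (\<Sum>k\<in>?K. d k * snd (ysig beta h Lay (Suc n) k) i)\<^sup>2)"
    by (rule sum_mono2[OF finN']) (auto, meson atLeastAtMost_iff le_Suc_eq)
  finally have "T * (\<Sum>i\<in>?N. (\<Sum>j\<in>Lay (Suc n). c j * snd (ysig beta h Lay n j) i)\<^sup>2)
     \<le> T * (\<Sum>i\<in>?N'. (\<Sum>k\<in>?K. d k * snd (ysig beta h Lay (Suc n) k) i)\<^sup>2)"
    using T by (rule mult_left_mono)
  then show ?case using IH f by simp
qed

theorem theorem1:
  fixes Lay :: "nat \<Rightarrow> 'v set" and L :: nat and S D :: 'v
    and h :: "'v \<Rightarrow> 'v \<Rightarrow> real" and Pup :: "'v \<Rightarrow> real" and PS :: real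
  assumes L: "L \<ge> 1"
    and fin: "\<And>l. l \<le> L \<Longrightarrow> finite (Lay l)"
    and disj: "\<And>l l'. l \<le> L \<Longrightarrow> l' \<le> L \<Longrightarrow> l \<noteq> l' \<Longrightarrow> Lay l \<inter> Lay l' = {}"
    and src: "Lay 0 = {S}" and dst: "Lay L = {D}"
    and hpos: "\<And>j k. h j k > 0"
    and Pup_nonneg: "\<And>k. Pup k \<ge> 0"
    and PS: "0 \<le> PS" "PS \<le> Pup S"
  shows "R_opt h Lay L D Pup PS
           \<le> Min ((\<lambda>l0. 1/2 * log 2 (1 + (\<Sum>k\<in>Lay l0. P_R h Lay Pup l0 k))) ` {1..L})"
proof -
  let ?NN = "noise_nodes Lay L"
  let ?R = "relay_nodes Lay L"
  have rate_le: "rate h Lay L D PS beta \<le> 1/2 * log 2 (1 + (\<Sum>k\<in>Lay l0. P_R h Lay Pup l0 k))"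
    if feas: "feasible h Lay L Pup PS beta" and l0: "l0 \<in> {1..L}" for beta l0
  proof -
    define p where "p = l0 - 1"
    have l0p: "l0 = Suc p" using l0 p_def by auto
    have pL: "Suc p \<le> L" using l0 l0p by auto
    define T where "T = (\<Sum>k\<in>Lay l0. P_R h Lay Pup l0 k)"
    have T0: "0 \<le> T" unfolding T_def P_R_def by (intro sum_nonneg) simp
    have alpha: "(fst (xsig beta h Lay p j))\<^sup>2 * PS \<le> Pup j" if j: "j \<in> Lay p" for j
    proof (cases p)
      case 0
      then show ?thesis using j src PS by simp
    next
      case (Suc q)
      then have "p \<in> {1..<L}" using pL by auto
      then have "power PS ?NN (xsig beta h Lay p j) \<le> Pup j"
        using feas j unfolding feasible_def by blast
      moreover have "(fst (xsig beta h Lay p j))\<^sup>2 * PS \<le> power PS ?NN (xsig beta h Lay p j)"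
        unfolding power_def by (simp add: sum_nonneg)
      ultimately show ?thesis by linarith
    qed
    have fk: "(fst (ysig beta h Lay p k))\<^sup>2 * PS \<le> P_R h Lay Pup l0 k" for k
    proof -
      let ?s = "(\<Sum>j\<in>Lay p. h j k * sqrt (Pup j))"
      have a1: "\<bar>fst (xsig beta h Lay p j)\<bar> * sqrt PS \<le> sqrt (Pup j)" if "j \<in> Lay p" for j
      proof -
        have "sqrt ((fst (xsig beta h Lay p j))\<^sup>2 * PS) \<le> sqrt (Pup j)"
          using alpha[OF that] by (rule real_sqrt_le_mono)
        then show ?thesis by (simp add: real_sqrt_mult)
      qed
      have "\<bar>fst (ysig beta h Lay p k)\<bar> * sqrt PS
            \<le> (\<Sum>j\<in>Lay p. h j k * \<bar>fst (xsig beta h Lay p j)\<bar>) * sqrt PS"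
        unfolding ysig_def using sum_abs[of "\<lambda>j. h j k * fst (xsig beta h Lay p j)" "Lay p"] hpos PS(1)
        by (intro mult_right_mono) (auto simp: abs_mult less_imp_le)
      also have "\<dots> = (\<Sum>j\<in>Lay p. h j k * (\<bar>fst (xsig beta h Lay p j)\<bar> * sqrt PS))"
        by (simp add: sum_distrib_right sum_distrib_left mult_ac)
      also have "\<dots> \<le> ?s"
        using a1 hpos by (intro sum_mono mult_left_mono) (auto simp: less_imp_le)
      finally have le: "\<bar>fst (ysig beta h Lay p k)\<bar> * sqrt PS \<le> ?s" .
      have "(fst (ysig beta h Lay p k))\<^sup>2 * PS = (\<bar>fst (ysig beta h Lay p k)\<bar> * sqrt PS)\<^sup>2"
        using PS by (simp add: power_mult_distrib)
      also have "\<dots> \<le> ?s\<^sup>2"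
        using le PS(1) by (intro power_mono) auto
      finally show ?thesis unfolding P_R_def l0p by simp
    qed
    have base: "(\<Sum>k\<in>Lay (Suc p). d k * fst (ysig beta h Lay p k))\<^sup>2 * PS
                  \<le> T * (\<Sum>k\<in>Lay (Suc p). (d k)\<^sup>2)" for d
    proof -
      have "(\<Sum>k\<in>Lay (Suc p). d k * fst (ysig beta h Lay p k))\<^sup>2 * PS
          \<le> ((\<Sum>k\<in>Lay (Suc p). (d k)\<^sup>2) * (\<Sum>k\<in>Lay (Suc p). (fst (ysig beta h Lay p k))\<^sup>2)) * PS"
        using PS by (intro mult_right_mono Cauchy_Schwarz_ineq_sum) auto
      also have "\<dots> = (\<Sum>k\<in>Lay (Suc p). (d k)\<^sup>2) * (\<Sum>k\<in>Lay (Suc p). (fst (ysig beta h Lay p k))\<^sup>2 * PS)"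
        by (simp add: sum_distrib_right[symmetric] mult.assoc)
      also have "\<dots> \<le> (\<Sum>k\<in>Lay (Suc p). (d k)\<^sup>2) * T"
        unfolding T_def l0p using fk[unfolded l0p]
        by (intro mult_left_mono sum_mono sum_nonneg) auto
      finally show ?thesis by (simp add: mult_ac)
    qed
    define n where "n = L - 1"
    have nL: "Suc n = L" using L n_def by simp
    have pn: "p \<le> n" using pL nL by simp
    let ?a = "fst (ysig beta h Lay n D)"
    let ?b = "snd (ysig beta h Lay n D)"
    let ?N = "\<Union>l\<in>{Suc p..Suc n}. Lay l"
    have inv: "(\<Sum>k\<in>Lay (Suc n). 1 * fst (ysig beta h Lay n k))\<^sup>2 * PS
         \<le> T * (\<Sum>i\<in>?N. (\<Sum>k\<in>Lay (Suc n). 1 * snd (ysig beta h Lay n k) i)\<^sup>2)"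
      by (rule invariant[OF fin disj PS(1) T0 base pn]) (use nL in auto)
    then have inv': "?a\<^sup>2 * PS \<le> T * (\<Sum>i\<in>?N. (?b i)\<^sup>2)" using nL dst by simp
    have finR: "finite ?R" unfolding relay_nodes_def using fin by auto
    have DR: "D \<notin> ?R"
    proof
      assume "D \<in> ?R"
      then obtain l where "l \<in> {1..<L}" "D \<in> Lay l" unfolding relay_nodes_def by blast
      then show False using disj[of L l] dst by auto
    qed
    have NR: "?N \<subseteq> insert D ?R"
    proof
      fix i assume "i \<in> ?N"
      then obtain l where l: "l \<in> {Suc p..Suc n}" "i \<in> Lay l" by blast
      show "i \<in> insert D ?R"
      proof (cases "l = L")
        case True then show ?thesis using l dst by simp
      next
        case False then show ?thesis using l nL unfolding relay_nodes_def by auto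
      qed
    qed
    have bD: "?b D = 1"
    proof -
      have "snd (xsig beta h Lay n j) D = 0" if "j \<in> Lay n" for j
      proof (rule xsig_support[where Lay=Lay and l=n, OF that])
        show "D \<notin> (\<Union>l'\<in>{1..n}. Lay l')"
        proof
          assume "D \<in> (\<Union>l'\<in>{1..n}. Lay l')"
          then obtain l where "l \<in> {1..n}" "D \<in> Lay l" by blast
          then show False using disj[of L l] dst nL by auto
        qed
      qed
      then show ?thesis unfolding ysig_def by simp
    qed
    define den where "den = (\<Sum>j\<in>?R. (?b j)\<^sup>2) + 1"
    have den1: "1 \<le> den" unfolding den_def by (simp add: sum_nonneg)
    have "(\<Sum>i\<in>?N. (?b i)\<^sup>2) \<le> (\<Sum>i\<in>insert D ?R. (?b i)\<^sup>2)"
      using finR NR by (intro sum_mono2) auto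
    also have "\<dots> = den" unfolding den_def using finR DR bD by simp
    finally have "?a\<^sup>2 * PS \<le> T * den" using inv' T0 by (meson mult_left_mono order_trans)
    then have snr: "?a\<^sup>2 * PS / den \<le> T" using den1 by (simp add: divide_le_eq)
    have snr0: "0 \<le> ?a\<^sup>2 * PS / den" using den1 PS by simp
    have "log 2 (1 + ?a\<^sup>2 * PS / den) \<le> log 2 (1 + T)"
      using snr snr0 by (subst log_le_cancel_iff) auto
    then show ?thesis unfolding rate_def Let_def den_def[symmetric] n_def[symmetric] T_def by simp
  qed
  let ?A = "{rate h Lay L D PS beta | beta. feasible h Lay L Pup PS beta}"
  have feas0: "feasible h Lay L Pup PS (\<lambda>_. 0)"
    unfolding feasible_def
  proof (intro ballI)
    fix l k assume l: "l \<in> {1..<L}"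
    then obtain q where "l = Suc q" by (cases l) auto
    then show "power PS ?NN (xsig (\<lambda>_. 0) h Lay l k) \<le> Pup k"
      using Pup_nonneg by (simp add: power_def)
  qed
  have ne: "?A \<noteq> {}" using feas0 by blast
  show ?thesis
    unfolding R_opt_def
  proof (rule Min.boundedI)
    show "finite ((\<lambda>l0. 1/2 * log 2 (1 + (\<Sum>k\<in>Lay l0. P_R h Lay Pup l0 k))) ` {1..L})" by simp
    show "(\<lambda>l0. 1/2 * log 2 (1 + (\<Sum>k\<in>Lay l0. P_R h Lay Pup l0 k))) ` {1..L} \<noteq> {}" using L by simp
  next
    fix a assume "a \<in> (\<lambda>l0. 1/2 * log 2 (1 + (\<Sum>k\<in>Lay l0. P_R h Lay Pup l0 k))) ` {1..L}"
    then obtain l0 where l0: "l0 \<in> {1..L}" and a: "a = 1/2 * log 2 (1 + (\<Sum>k\<in>Lay l0. P_R h Lay Pup l0 k))" by blast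
    show "Sup ?A \<le> a"
      using ne rate_le[OF _ l0] unfolding a by (intro cSup_least) auto
  qed
qed

end
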